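(* For every $t_0>-(\mu-1)$ there exists $\gamma(t_0)>0$ such that for all $N\in\mathbb N$ and all $t>-(\mu-1)$, $\frac{Z_N(t)}{Z_N(t_0)}\geq e^{-\gamma(t_0)|t-t_0|/2}$.
   Context: Fix $\mu>1$. For $N\in\mathbb N$ let $K_N$ be the periodic discrete Laplacian $(K_Nx)_k=\frac{\mu}{4\sin^2(\pi/N)}(2x_k-x_{k+1}-x_{k-1})$ (indices mod $N$). Let $A$ be an $N\times(N-1)$ matrix whose columns form an orthonormal basis of $\{x\in\mathbb R^N:\sum_kx_k=0\}$. For $y\in\mathbb R^{N-1}$ let $P_2(y)=\sum_{k=1}^N(Ay)_k^2$ and $Q(y)=\langle Ay,K_NAy\rangle-P_2(y)$. For $t>-(\mu-1)$ let $Z_N(t)=\int_{\mathbb R^{N-1}}e^{-\frac{tP_2(y)+Q(y)}{2N}}dy$. *)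

theory Defs
  imports "HOL-Analysis.Analysis"
begin

text \<open>Vectors in R^N are functions nat \<Rightarrow> real used on indices k < N;
  an N x (N-1) matrix A is a function nat \<Rightarrow> nat \<Rightarrow> real, entry A k j
  for k < N, j < N - 1.\<close>

definition KN :: "real \<Rightarrow> nat \<Rightarrow> (nat \<Rightarrow> real) \<Rightarrow> nat \<Rightarrow> real" where
  "KN \<mu> N x k = \<mu> / (4 * (sin (pi / real N))^2) *
      (2 * x k - x ((k + 1) mod N) - x ((k + N - 1) mod N))"

definition onb_sum_zero :: "nat \<Rightarrow> (nat \<Rightarrow> nat \<Rightarrow> real) \<Rightarrow> bool" where
  "onb_sum_zero N A \<longleftrightarrow>
     (\<forall>j < N - 1. (\<Sum>k<N. A k j) = 0) \<and>
     (\<forall>i < N - 1. \<forall>j < N - 1. (\<Sum>k<N. A k i * A k j) = (if i = j then 1 else 0)) \<and>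
     (\<forall>x :: nat \<Rightarrow> real. (\<Sum>k<N. x k) = 0 \<longrightarrow>
        (\<exists>c :: nat \<Rightarrow> real. \<forall>k<N. x k = (\<Sum>j<N - 1. c j * A k j)))"

definition matvec :: "nat \<Rightarrow> (nat \<Rightarrow> nat \<Rightarrow> real) \<Rightarrow> (nat \<Rightarrow> real) \<Rightarrow> nat \<Rightarrow> real" where
  "matvec N A y k = (\<Sum>j<N - 1. A k j * y j)"

definition P2 :: "nat \<Rightarrow> (nat \<Rightarrow> nat \<Rightarrow> real) \<Rightarrow> (nat \<Rightarrow> real) \<Rightarrow> real" where
  "P2 N A y = (\<Sum>k<N. (matvec N A y k)^2)"

definition Qf :: "real \<Rightarrow> nat \<Rightarrow> (nat \<Rightarrow> nat \<Rightarrow> real) \<Rightarrow> (nat \<Rightarrow> real) \<Rightarrow> real" where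
  "Qf \<mu> N A y = (\<Sum>k<N. matvec N A y k * KN \<mu> N (matvec N A y) k) - P2 N A y"

definition ZN :: "real \<Rightarrow> nat \<Rightarrow> (nat \<Rightarrow> nat \<Rightarrow> real) \<Rightarrow> real \<Rightarrow> real" where
  "ZN \<mu> N A t = (\<integral>y. exp (- (t * P2 N A y + Qf \<mu> N A y) / (2 * real N))
                    \<partial>(PiM {..<N - 1} (\<lambda>_. lborel)))"

end

theory Submission
  imports Defs "Jordan_Normal_Form.Determinant" "HOL-Probability.Distributions"
begin

lemma sum_cos_root:
  fixes m :: int and N :: nat
  assumes N: "N > 0"
  shows "(\<Sum>j<N. cos (2 * pi * real_of_int m * real j / real N)) = (if int N dvd m then real N else 0)"
    and "(\<Sum>j<N. sin (2 * pi * real_of_int m * real j / real N)) = 0"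
proof -
  define \<theta> where "\<theta> = 2 * pi * real_of_int m / real N"
  have th: "2 * pi * real_of_int m * real j / real N = real j * \<theta>" for j
    by (simp add: \<theta>_def)
  have Nth: "real N * \<theta> = 2 * pi * real_of_int m" using N by (simp add: \<theta>_def)
  have tel1: "2 * sin (\<theta>/2) * (\<Sum>j<N. cos (real j * \<theta>)) = sin ((real N - 1/2) * \<theta>) + sin (\<theta>/2)"
  proof -
    have "2 * sin (\<theta>/2) * cos (real j * \<theta>) = sin ((real (Suc j) - 1/2) * \<theta>) - sin ((real j - 1/2) * \<theta>)" for j
    proof -
      have "sin ((real (Suc j) - 1/2) * \<theta>) = sin (real j * \<theta> + \<theta>/2)" by (simp add: algebra_simps)
      moreover have "sin ((real j - 1/2) * \<theta>) = sin (real j * \<theta> - \<theta>/2)" by (simp add: algebra_simps)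
      ultimately show ?thesis by (simp add: sin_add sin_diff)
    qed
    then have "2 * sin (\<theta>/2) * (\<Sum>j<N. cos (real j * \<theta>)) = (\<Sum>j<N. sin ((real (Suc j) - 1/2) * \<theta>) - sin ((real j - 1/2) * \<theta>))"
      by (simp add: sum_distrib_left)
    also have "\<dots> = sin ((real N - 1/2) * \<theta>) - sin ((real 0 - 1/2) * \<theta>)"
      by (rule sum_lessThan_telescope)
    finally show ?thesis by simp
  qed
  have tel2: "2 * sin (\<theta>/2) * (\<Sum>j<N. sin (real j * \<theta>)) = cos (\<theta>/2) - cos ((real N - 1/2) * \<theta>)"
  proof -
    have "2 * sin (\<theta>/2) * sin (real j * \<theta>) = cos ((real j - 1/2) * \<theta>) - cos ((real (Suc j) - 1/2) * \<theta>)" for j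
    proof -
      have "cos ((real (Suc j) - 1/2) * \<theta>) = cos (real j * \<theta> + \<theta>/2)" by (simp add: algebra_simps)
      moreover have "cos ((real j - 1/2) * \<theta>) = cos (real j * \<theta> - \<theta>/2)" by (simp add: algebra_simps)
      ultimately show ?thesis by (simp add: cos_add cos_diff)
    qed
    then have "2 * sin (\<theta>/2) * (\<Sum>j<N. sin (real j * \<theta>)) = (\<Sum>j<N. cos ((real j - 1/2) * \<theta>) - cos ((real (Suc j) - 1/2) * \<theta>))"
      by (simp only: sum_distrib_left)
    also have "\<dots> = cos ((real 0 - 1/2) * \<theta>) - cos ((real N - 1/2) * \<theta>)"
      by (rule sum_lessThan_telescope')
    finally show ?thesis by simp
  qed
  have per: "(real N - 1/2) * \<theta> = - (\<theta>/2) + real_of_int m * (2 * pi)"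
    using Nth by (simp add: algebra_simps)
  have sm: "sin (real_of_int m * (2 * pi)) = 0" "cos (real_of_int m * (2 * pi)) = 1"
    using sin_int_2pin[of m] cos_int_2pin[of m] by (simp_all add: mult.commute)
  have s1: "sin ((real N - 1/2) * \<theta>) = - sin (\<theta>/2)"
    unfolding per by (simp only: sin_add sm) simp
  have c1: "cos ((real N - 1/2) * \<theta>) = cos (\<theta>/2)"
    unfolding per by (simp only: cos_add sm) simp
  have "(\<Sum>j<N. cos (real j * \<theta>)) = (if int N dvd m then real N else 0) \<and> (\<Sum>j<N. sin (real j * \<theta>)) = 0"
  proof (cases "int N dvd m")
    case True
    then obtain q where q: "m = int N * q" by (auto simp: dvd_def)
    have e: "real j * \<theta> = real_of_int (int j * q) * (2 * pi)" for j
      using N by (simp add: \<theta>_def q field_simps)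
    have "cos (real j * \<theta>) = 1" "sin (real j * \<theta>) = 0" for j
      unfolding e using sin_int_2pin[of "int j * q"] cos_int_2pin[of "int j * q"]
      by (simp_all only: mult.commute)
    then show ?thesis using True by simp
  next
    case False
    have "sin (\<theta>/2) \<noteq> 0"
    proof
      assume "sin (\<theta>/2) = 0"
      then obtain i :: int where i: "\<theta>/2 = of_int i * pi" by (auto simp: sin_zero_iff_int2)
      then have "real_of_int m = real_of_int (int N * i)" using N by (simp add: \<theta>_def field_simps)
      then have "m = int N * i" by linarith
      then show False using False by simp
    qed
    then show ?thesis using False tel1 tel2 s1 c1 by auto
  qed
  then show "(\<Sum>j<N. cos (2 * pi * real_of_int m * real j / real N)) = (if int N dvd m then real N else 0)"
    and "(\<Sum>j<N. sin (2 * pi * real_of_int m * real j / real N)) = 0"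
    by (simp_all add: th)
qed

definition cas :: "real \<Rightarrow> real" where "cas x = cos x + sin x"

definition hb :: "nat \<Rightarrow> nat \<Rightarrow> nat \<Rightarrow> real" where
  "hb N k j = cas (2 * pi * real k * real j / real N) / sqrt (real N)"

lemma cas_mult: "cas a * cas b = cos (a - b) + sin (a + b)"
  by (simp add: cas_def cos_diff sin_add algebra_simps)

lemma cas_periodic: "cas (x + real_of_int i * (2 * pi)) = cas x"
proof -
  have "sin (real_of_int i * (2 * pi)) = 0" "cos (real_of_int i * (2 * pi)) = 1"
    using sin_int_2pin[of i] cos_int_2pin[of i] by (simp_all add: mult.commute)
  then show ?thesis by (simp add: cas_def sin_add cos_add)
qed

lemma hb_sym: "hb N k j = hb N j k"
  by (simp add: hb_def mult_ac)

lemma hb_prod: "N > 0 \<Longrightarrow> hb N k j * hb N l j = (cos (2 * pi * real_of_int (int k - int l) * real j / real N)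
        + sin (2 * pi * real_of_int (int k + int l) * real j / real N)) / real N"
proof -
  assume N: "N > 0"
  have "hb N k j * hb N l j = cas (2 * pi * real k * real j / real N) * cas (2 * pi * real l * real j / real N) / real N"
    using N by (simp add: hb_def)
  also have "\<dots> = (cos (2 * pi * real_of_int (int k - int l) * real j / real N)
        + sin (2 * pi * real_of_int (int k + int l) * real j / real N)) / real N"
    unfolding cas_mult by (simp add: diff_divide_distrib add_divide_distrib algebra_simps)
  finally show ?thesis .
qed

lemma hb_orth:
  assumes N: "N > 0" and k: "k < N" and l: "l < N"
  shows "(\<Sum>j<N. hb N k j * hb N l j) = (if k = l then 1 else 0)"
proof -
  have "(\<Sum>j<N. hb N k j * hb N l j) = ((\<Sum>j<N. cos (2 * pi * real_of_int (int k - int l) * real j / real N))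
        + (\<Sum>j<N. sin (2 * pi * real_of_int (int k + int l) * real j / real N))) / real N"
    unfolding hb_prod[OF N] sum_divide_distrib[symmetric] sum.distrib[symmetric] ..
  also have "\<dots> = (if int N dvd (int k - int l) then 1 else 0)"
    unfolding sum_cos_root[OF N] using N by simp
  also have "(int N dvd (int k - int l)) = (k = l)"
  proof
    assume "int N dvd (int k - int l)"
    then obtain q where q: "int k - int l = int N * q" by (auto simp: dvd_def)
    have "q = 0"
    proof (rule ccontr)
      assume "q \<noteq> 0"
      then have "\<bar>q\<bar> \<ge> 1" by (cases "q > 0") auto
      then have "int N * \<bar>q\<bar> \<ge> int N * 1" by (intro mult_left_mono) auto
      then have "\<bar>int N * q\<bar> \<ge> int N" by (simp add: abs_mult)
      then show False using q k l by linarith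
    qed
    then show "k = l" using q by simp
  qed simp
  finally show ?thesis .
qed

lemma hb_compl:
  assumes N: "N > 0" and i: "i < N" and j: "j < N"
  shows "(\<Sum>k<N. hb N k i * hb N k j) = (if i = j then 1 else 0)"
  using hb_orth[OF N i j] by (simp add: hb_sym)

lemma hb_mod: "N > 0 \<Longrightarrow> hb N k (p mod N) = hb N k p"
proof -
  assume N: "N > 0"
  define a where "a = real (p mod N)"
  define b where "b = real (p div N)"
  have r: "a + real N * b = real p"
    unfolding a_def b_def by (metis div_mult_mod_eq of_nat_add of_nat_mult mult.commute add.commute)
  have "2 * pi * real k * a / real N = 2 * pi * real k * (a + real N * b) / real N - 2 * pi * real k * b"
    using N by (simp add: field_simps)
  then have eq: "2 * pi * real k * real (p mod N) / real N
      = 2 * pi * real k * real p / real N + real_of_int (- int (k * (p div N))) * (2 * pi)"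
    unfolding r by (simp add: a_def b_def algebra_simps)
  show ?thesis by (simp only: hb_def eq cas_periodic)
qed

lemma hb_eigen:
  assumes N: "N > 0"
  shows "2 * hb N k j - hb N k ((j + 1) mod N) - hb N k ((j + N - 1) mod N)
       = 4 * (sin (pi * real k / real N))^2 * hb N k j"
proof -
  define \<theta> where "\<theta> = 2 * pi * real k / real N"
  have a: "hb N k ((j + 1) mod N) = cas (real j * \<theta> + \<theta>) / sqrt (real N)"
    unfolding hb_mod[OF N] by (simp add: hb_def \<theta>_def algebra_simps add_divide_distrib)
  have "2 * pi * real k * real (j + N - 1) / real N = (real j * \<theta> - \<theta>) + real_of_int (int k) * (2 * pi)"
    using N by (simp add: \<theta>_def field_simps of_nat_diff)
  then have b: "hb N k ((j + N - 1) mod N) = cas (real j * \<theta> - \<theta>) / sqrt (real N)"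
    unfolding hb_mod[OF N] unfolding hb_def by (simp only: cas_periodic)
  have "2 * pi * real k * real j / real N = real j * \<theta>" by (simp add: \<theta>_def)
  then have c: "hb N k j = cas (real j * \<theta>) / sqrt (real N)"
    by (simp only: hb_def)
  have d: "cas (real j * \<theta> + \<theta>) + cas (real j * \<theta> - \<theta>) = 2 * cos \<theta> * cas (real j * \<theta>)"
    by (simp add: cas_def sin_add sin_diff cos_add cos_diff algebra_simps)
  have e: "cos \<theta> = 1 - 2 * (sin (pi * real k / real N))^2"
    using cos_double_sin[of "pi * real k / real N"] by (simp add: \<theta>_def mult.assoc)
  show ?thesis
  proof -
    have "2 * cas (real j * \<theta>) - cas (real j * \<theta> + \<theta>) - cas (real j * \<theta> - \<theta>)
        = 4 * (sin (pi * real k / real N))^2 * cas (real j * \<theta>)"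
      using d unfolding e by (simp add: algebra_simps)
    then show ?thesis unfolding a b c by (simp add: diff_divide_distrib[symmetric])
  qed
qed

definition coef :: "nat \<Rightarrow> (nat \<Rightarrow> real) \<Rightarrow> nat \<Rightarrow> real" where
  "coef N x k = (\<Sum>j<N. hb N k j * x j)"

lemma expand:
  assumes N: "N > 0" and i: "i < N"
  shows "x i = (\<Sum>k<N. coef N x k * hb N k i)"
proof -
  have "(\<Sum>k<N. coef N x k * hb N k i) = (\<Sum>k<N. \<Sum>j<N. x j * (hb N k j * hb N k i))"
    unfolding coef_def sum_distrib_right by (intro sum.cong refl) (simp add: mult_ac)
  also have "\<dots> = (\<Sum>j<N. x j * (\<Sum>k<N. hb N k j * hb N k i))"
    by (subst sum.swap) (simp add: sum_distrib_left)
  also have "\<dots> = (\<Sum>j<N. x j * (if j = i then 1 else 0))"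
    by (intro sum.cong refl) (simp add: hb_compl[OF N _ i])
  also have "\<dots> = x i" using i by (simp add: if_distrib cong: if_cong)
  finally show ?thesis by simp
qed

lemma parseval:
  assumes N: "N > 0"
  shows "(\<Sum>j<N. (x j)^2) = (\<Sum>k<N. (coef N x k)^2)"
proof -
  have "(\<Sum>j<N. (x j)^2) = (\<Sum>j<N. x j * (\<Sum>k<N. coef N x k * hb N k j))"
    by (intro sum.cong refl) (simp add: power2_eq_square expand[OF N, symmetric])
  also have "\<dots> = (\<Sum>k<N. coef N x k * (\<Sum>j<N. hb N k j * x j))"
    by (simp add: sum_distrib_left sum_distrib_right mult_ac) (rule sum.swap)
  also have "\<dots> = (\<Sum>k<N. (coef N x k)^2)"
    by (simp add: coef_def power2_eq_square)
  finally show ?thesis .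
qed

lemma parseval2:
  assumes N: "N > 0"
  shows "(\<Sum>j<N. x j * z j) = (\<Sum>k<N. coef N x k * coef N z k)"
proof -
  have "(\<Sum>j<N. x j * z j) = (\<Sum>j<N. x j * (\<Sum>k<N. coef N z k * hb N k j))"
    by (intro sum.cong refl) (simp add: expand[OF N, symmetric])
  also have "\<dots> = (\<Sum>k<N. coef N z k * (\<Sum>j<N. hb N k j * x j))"
    by (simp add: sum_distrib_left sum_distrib_right mult_ac) (rule sum.swap)
  also have "\<dots> = (\<Sum>k<N. coef N x k * coef N z k)"
    by (simp add: coef_def mult_ac)
  finally show ?thesis .
qed

lemma lap_form:
  assumes N: "N > 0"
  shows "(\<Sum>j<N. x j * (2 * x j - x ((j + 1) mod N) - x ((j + N - 1) mod N)))
       = (\<Sum>k<N. 4 * (sin (pi * real k / real N))^2 * (coef N x k)^2)"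
proof -
  have L: "2 * x j - x ((j + 1) mod N) - x ((j + N - 1) mod N)
       = (\<Sum>k<N. coef N x k * (4 * (sin (pi * real k / real N))^2) * hb N k j)" if j: "j < N" for j
  proof -
    have m1: "(j + 1) mod N < N" "(j + N - 1) mod N < N" using N by simp_all
    have "2 * x j - x ((j + 1) mod N) - x ((j + N - 1) mod N)
       = (\<Sum>k<N. coef N x k * (2 * hb N k j - hb N k ((j + 1) mod N) - hb N k ((j + N - 1) mod N)))"
    proof -
      have e1: "x j = (\<Sum>k<N. coef N x k * hb N k j)" by (rule expand[OF N j])
      have e2: "x ((j + 1) mod N) = (\<Sum>k<N. coef N x k * hb N k ((j + 1) mod N))" by (rule expand[OF N m1(1)])
      have e3: "x ((j + N - 1) mod N) = (\<Sum>k<N. coef N x k * hb N k ((j + N - 1) mod N))" by (rule expand[OF N m1(2)])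
      have "(\<Sum>k<N. coef N x k * (2 * hb N k j - hb N k ((j + 1) mod N) - hb N k ((j + N - 1) mod N)))
         = 2 * (\<Sum>k<N. coef N x k * hb N k j) - (\<Sum>k<N. coef N x k * hb N k ((j + 1) mod N))
           - (\<Sum>k<N. coef N x k * hb N k ((j + N - 1) mod N))"
        by (simp only: sum_subtractf[symmetric] sum_distrib_left right_diff_distrib mult.left_commute)
      then show ?thesis by (simp only: e1 e2 e3)
    qed
    also have "\<dots> = (\<Sum>k<N. coef N x k * (4 * (sin (pi * real k / real N))^2) * hb N k j)"
      by (simp only: hb_eigen[OF N]) (simp add: mult_ac)
    finally show ?thesis .
  qed
  have "(\<Sum>j<N. x j * (2 * x j - x ((j + 1) mod N) - x ((j + N - 1) mod N)))
      = (\<Sum>j<N. x j * (\<Sum>k<N. coef N x k * (4 * (sin (pi * real k / real N))^2) * hb N k j))"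
    by (rule sum.cong[OF refl]) (simp only: L lessThan_iff)
  also have "\<dots> = (\<Sum>k<N. coef N x k * (4 * (sin (pi * real k / real N))^2) * (\<Sum>j<N. hb N k j * x j))"
    by (simp add: sum_distrib_left sum_distrib_right mult_ac) (rule sum.swap)
  also have "\<dots> = (\<Sum>k<N. 4 * (sin (pi * real k / real N))^2 * (coef N x k)^2)"
    by (simp add: coef_def power2_eq_square mult_ac)
  finally show ?thesis .
qed

lemma coef0: "coef N x 0 = (\<Sum>j<N. x j) / sqrt (real N)"
  by (simp add: coef_def hb_def cas_def sum_divide_distrib)


definition qf :: "nat \<Rightarrow> (nat \<Rightarrow> nat \<Rightarrow> real) \<Rightarrow> (nat \<Rightarrow> real) \<Rightarrow> real" where
  "qf n M y = (\<Sum>i<n. \<Sum>j<n. y i * M i j * y j)"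

definition pdm :: "nat \<Rightarrow> (nat \<Rightarrow> nat \<Rightarrow> real) \<Rightarrow> bool" where
  "pdm n M \<longleftrightarrow> (\<forall>i<n. \<forall>j<n. M i j = M j i) \<and> (\<forall>y. (\<exists>i<n. y i \<noteq> 0) \<longrightarrow> 0 < qf n M y)"

definition dtm :: "nat \<Rightarrow> (nat \<Rightarrow> nat \<Rightarrow> real) \<Rightarrow> real" where
  "dtm n M = Determinant.det (Matrix.mat n n (\<lambda>(i,j). M i j))"

definition schur :: "nat \<Rightarrow> (nat \<Rightarrow> nat \<Rightarrow> real) \<Rightarrow> nat \<Rightarrow> nat \<Rightarrow> real" where
  "schur n M i j = M i j - M i n * M n j / M n n"

lemma dtm_schur:
  assumes a: "M n n \<noteq> 0"
  shows "dtm (Suc n) M = M n n * dtm n (schur n M)"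
proof -
  define A where "A = Matrix.mat (Suc n) (Suc n) (\<lambda>(i,j). M i j)"
  define E where "E = Matrix.mat (Suc n) (Suc n) (\<lambda>(i,j). if i = j then 1 else if i = n then - M n j / M n n else 0)"
  define B where "B = four_block_mat (Matrix.mat n n (\<lambda>(i,j). schur n M i j)) (Matrix.mat n 1 (\<lambda>(i,j). M i n)) (0\<^sub>m 1 n) (Matrix.mat 1 1 (\<lambda>_. M n n))"
  have AC: "A \<in> carrier_mat (Suc n) (Suc n)" "E \<in> carrier_mat (Suc n) (Suc n)"
    by (simp_all add: A_def E_def)
  have sumE: "(\<Sum>k<Suc n. M i k * (if k = j then 1 else if k = n then c else 0)) = M i j + M i n * c"
    if "j < n" for i j c
  proof -
    have "(\<Sum>k<n. M i k * (if k = j then 1 else if k = n then c else 0)) = (\<Sum>k<n. if k = j then M i k else 0)"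
      by (intro sum.cong refl) auto
    also have "\<dots> = M i j" using that by simp
    finally show ?thesis using that by simp
  qed
  have sumE2: "(\<Sum>k<Suc n. M i k * (if k = n then 1 else 0)) = M i n" for i
    by simp
  have AE: "A * E = B"
  proof (rule eq_matI)
    show "dim_row (A * E) = dim_row B" "dim_col (A * E) = dim_col B"
      by (simp_all add: A_def E_def B_def)
    fix i j assume i: "i < dim_row B" and j: "j < dim_col B"
    then have i': "i < Suc n" and j': "j < Suc n" by (simp_all add: B_def)
    have "(A * E) $$ (i, j) = (\<Sum>k<Suc n. M i k * E $$ (k, j))"
      using i' j' by (simp add: A_def E_def scalar_prod_def atLeast0LessThan)
    also have "\<dots> = (\<Sum>k<Suc n. M i k * (if k = j then 1 else if k = n then - M n j / M n n else 0))"
      using j' by (intro sum.cong refl) (simp add: E_def)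
    also have "\<dots> = B $$ (i, j)"
    proof (cases "j < n")
      case True
      then have "(\<Sum>k<Suc n. M i k * (if k = j then 1 else if k = n then - M n j / M n n else 0)) = M i j + M i n * (- M n j / M n n)"
        by (rule sumE)
      then show ?thesis using True i' a
        by (cases "i < n") (auto simp: B_def schur_def field_simps less_Suc_eq)
    next
      case False
      then have jn: "j = n" using j' by simp
      have "(\<Sum>k<Suc n. M i k * (if k = j then 1 else if k = n then - M n j / M n n else 0)) = M i n"
        unfolding jn by simp
      then show ?thesis using jn i'
        by (cases "i < n") (auto simp: B_def less_Suc_eq)
    qed
    finally show "(A * E) $$ (i, j) = B $$ (i, j)" .
  qed
  have dE: "Determinant.det E = 1"
  proof -
    have "Determinant.det E = prod_list (diag_mat E)"
      by (rule det_lower_triangular[of "Suc n"]) (auto simp: E_def)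
    also have "diag_mat E = map (\<lambda>i. 1) [0..<Suc n]"
      unfolding diag_mat_def by (intro map_cong) (auto simp: E_def)
    finally show ?thesis by (simp add: map_replicate_const)
  qed
  have dB: "Determinant.det B = dtm n (schur n M) * M n n"
    unfolding B_def dtm_def
    by (subst det_four_block_mat_lower_left_zero[of _ n _ 1]) (auto simp: det_single)
  have "Determinant.det (A * E) = Determinant.det A * Determinant.det E"
    by (rule det_mult[OF AC])
  then have "dtm (Suc n) M = dtm n (schur n M) * M n n" using dE dB AE by (simp add: dtm_def A_def)
  then show ?thesis by (simp add: mult.commute)
qed


lemma qf_Suc:
  assumes sym: "\<forall>i<n. M i n = M n i"
  shows "qf (Suc n) M y = qf n M y + 2 * y n * (\<Sum>i<n. M n i * y i) + M n n * (y n)^2"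
proof -
  have "qf (Suc n) M y = (\<Sum>i<n. (\<Sum>j<n. y i * M i j * y j) + y i * M i n * y n) + ((\<Sum>j<n. y n * M n j * y j) + y n * M n n * y n)"
    by (simp add: qf_def)
  also have "\<dots> = qf n M y + (\<Sum>i<n. y i * M i n * y n) + (\<Sum>j<n. y n * M n j * y j) + M n n * (y n)^2"
    by (simp add: qf_def sum.distrib power2_eq_square mult_ac)
  also have "(\<Sum>i<n. y i * M i n * y n) = y n * (\<Sum>i<n. M n i * y i)"
    using sym by (simp add: sum_distrib_left mult_ac)
  also have "(\<Sum>j<n. y n * M n j * y j) = y n * (\<Sum>i<n. M n i * y i)"
    by (simp add: sum_distrib_left mult_ac)
  finally show ?thesis by simp
qed

lemma qf_upd: "qf n M (y(n := u)) = qf n M y"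
  unfolding qf_def by (intro sum.cong refl) auto

lemma lin_upd: "(\<Sum>i<(n::nat). M n i * (y(n := u)) i) = (\<Sum>i<n. M n i * y i)"
proof (rule sum.cong[OF refl])
  fix i assume "i \<in> {..<(n::nat)}"
  then have "i \<noteq> n" by simp
  then show "M n i * (y(n := u)) i = M n i * y i" by simp
qed

lemma qf_schur:
  assumes sym: "\<forall>i<n. M i n = M n i"
  shows "qf n (schur n M) y = qf n M y - (\<Sum>i<n. M n i * y i)^2 / M n n"
proof -
  have "qf n (schur n M) y = (\<Sum>i<n. \<Sum>j<n. y i * M i j * y j - (M n i * y i) * (M n j * y j) / M n n)"
    unfolding qf_def schur_def using sym by (intro sum.cong refl) (simp add: algebra_simps)
  also have "\<dots> = qf n M y - (\<Sum>i<n. \<Sum>j<n. (M n i * y i) * (M n j * y j)) / M n n"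
    by (simp add: qf_def sum_subtractf sum_divide_distrib)
  also have "(\<Sum>i<n. \<Sum>j<n. (M n i * y i) * (M n j * y j)) = (\<Sum>i<n. M n i * y i)^2"
    by (simp add: power2_eq_square sum_product)
  finally show ?thesis .
qed

lemma qf_meas:
  assumes "{..<n} \<subseteq> I"
  shows "(\<lambda>y. qf n M y) \<in> borel_measurable (PiM I (\<lambda>_. lborel :: real measure))"
  unfolding qf_def
proof (intro borel_measurable_sum borel_measurable_times)
  fix i assume "i \<in> {..<n}"
  then have "i \<in> I" using assms by auto
  then show "(\<lambda>x. x i) \<in> borel_measurable (PiM I (\<lambda>_. lborel :: real measure))"
    using measurable_component_singleton[of i I "\<lambda>_. lborel :: real measure"] by simp
next
  fix i assume "i \<in> {..<n}"
  then have "i \<in> I" using assms by auto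
  then show "(\<lambda>x. x i) \<in> borel_measurable (PiM I (\<lambda>_. lborel :: real measure))"
    using measurable_component_singleton[of i I "\<lambda>_. lborel :: real measure"] by simp
qed simp

lemma gauss_1d:
  assumes a: "a > 0"
  shows "(\<integral>\<^sup>+u. ennreal (exp (- (q + 2 * u * b + a * u^2) / 2)) \<partial>lborel)
       = ennreal (exp (- (q - b^2 / a) / 2) * sqrt (2 * pi / a))"
proof -
  define c where "c = exp (- (q - b^2 / a) / 2) * sqrt (2 * pi / a)"
  have c0: "c \<ge> 0" using a by (auto simp: c_def intro!: mult_nonneg_nonneg)
  have eq: "exp (- (q + 2 * u * b + a * u^2) / 2) = c * normal_density (- b / a) (1 / sqrt a) u" for u
  proof -
    have s: "(1 / sqrt a)^2 = 1 / a" using a by (simp add: power_divide)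
    have "normal_density (- b / a) (1 / sqrt a) u = 1 / sqrt (2 * pi / a) * exp (- (((u + b / a)^2) * a) / 2)"
      unfolding normal_density_def s using a by (simp add: field_simps)
    then have "c * normal_density (- b / a) (1 / sqrt a) u = exp (- (q - b^2 / a) / 2) * exp (- (((u + b / a)^2) * a) / 2)"
      using a by (simp add: c_def)
    also have "\<dots> = exp (- (q + 2 * u * b + a * u^2) / 2)"
      unfolding exp_add[symmetric] using a by (simp add: field_simps power2_eq_square)
    finally show ?thesis by simp
  qed
  have "(\<integral>\<^sup>+u. ennreal (exp (- (q + 2 * u * b + a * u^2) / 2)) \<partial>lborel)
      = (\<integral>\<^sup>+u. ennreal c * ennreal (normal_density (- b / a) (1 / sqrt a) u) \<partial>lborel)"
    by (intro nn_integral_cong) (simp only: eq, rule ennreal_mult[OF c0], simp)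
  also have "\<dots> = ennreal c * (\<integral>\<^sup>+u. ennreal (normal_density (- b / a) (1 / sqrt a) u) \<partial>lborel)"
    by (rule nn_integral_cmult) simp
  also have "(\<integral>\<^sup>+u. ennreal (normal_density (- b / a) (1 / sqrt a) u) \<partial>lborel) = 1"
  proof -
    have i1: "integrable lborel (normal_density (- b / a) (1 / sqrt a))" by (rule integrable_normal_density) (use a in simp)
    have i2: "(\<integral>u. normal_density (- b / a) (1 / sqrt a) u \<partial>lborel) = 1" by (rule integral_normal_density) (use a in simp)
    have i3: "AE u in lborel. 0 \<le> normal_density (- b / a) (1 / sqrt a) u" by (simp add: normal_density_nonneg)
    show ?thesis unfolding nn_integral_eq_integral[OF i1 i3] i2 by simp
  qed
  finally show ?thesis by (simp add: c_def)
qed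

lemma gauss:
  "pdm n M \<Longrightarrow> dtm n M > 0 \<and>
     (\<integral>\<^sup>+y. ennreal (exp (- qf n M y / 2)) \<partial>PiM {..<n} (\<lambda>_. lborel :: real measure))
       = ennreal (sqrt ((2 * pi)^n / dtm n M))"
proof (induction n arbitrary: M)
  case 0
  have "dtm 0 M = 1" by (simp add: dtm_def)
  moreover have "(\<integral>\<^sup>+y. ennreal (exp (- qf 0 M y / 2)) \<partial>PiM {..<0} (\<lambda>_. lborel :: real measure)) = 1"
    by (simp add: PiM_empty nn_integral_count_space_finite qf_def)
  ultimately show ?case by simp
next
  case (Suc n)
  interpret product_sigma_finite "\<lambda>_::nat. lborel :: real measure" by standard
  have symM: "\<forall>i<Suc n. \<forall>j<Suc n. M i j = M j i" and posM: "\<And>y. (\<exists>i<Suc n. y i \<noteq> 0) \<Longrightarrow> 0 < qf (Suc n) M y"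
    using Suc.prems by (auto simp: pdm_def)
  have sym: "\<forall>i<n. M i n = M n i" using symM by auto
  define a where "a = M n n"
  define b where "b = (\<lambda>y. \<Sum>i<n. M n i * y i)"
  have Q: "qf (Suc n) M y = qf n M y + 2 * y n * b y + a * (y n)^2" for y
    using qf_Suc[OF sym] by (simp add: a_def b_def)
  have a: "a > 0"
  proof -
    define y0 where "y0 = (\<lambda>i::nat. if i = n then (1::real) else 0)"
    have "qf n M y0 = 0" "b y0 = 0" by (simp_all add: qf_def b_def y0_def)
    then have "qf (Suc n) M y0 = a" by (simp add: Q y0_def)
    moreover have "0 < qf (Suc n) M y0" by (rule posM) (auto simp: y0_def)
    ultimately show ?thesis by simp
  qed
  define S where "S = schur n M"
  have QS: "qf n S y = qf n M y - (b y)^2 / a" for y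
    unfolding S_def using qf_schur[OF sym] by (simp add: a_def b_def)
  have pdS: "pdm n S"
    unfolding pdm_def
  proof (intro conjI allI impI)
    fix i j assume "i < n" "j < n"
    then show "S i j = S j i" using symM by (simp add: S_def schur_def)
  next
    fix y :: "nat \<Rightarrow> real" assume "\<exists>i<n. y i \<noteq> 0"
    then obtain i where i: "i < n" "y i \<noteq> 0" by auto
    define u where "u = - b y / a"
    have "0 < qf (Suc n) M (y(n := u))" by (rule posM) (use i in auto)
    also have "qf (Suc n) M (y(n := u)) = qf n M y + 2 * u * b y + a * u^2"
      unfolding Q by (simp add: qf_upd b_def lin_upd)
    also have "\<dots> = qf n S y" unfolding QS u_def using a by (simp add: field_simps power2_eq_square)
    finally show "0 < qf n S y" .
  qed
  note IH = Suc.IH[OF pdS]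
  have dt: "dtm (Suc n) M = a * dtm n S"
    unfolding S_def a_def by (rule dtm_schur) (use a a_def in simp)
  have dtpos: "dtm (Suc n) M > 0" using dt IH a by simp
  have ins: "{..<Suc n} = insert n {..<n}" by auto
  have meas: "(\<lambda>y. ennreal (exp (- qf (Suc n) M y / 2))) \<in> borel_measurable (PiM (insert n {..<n}) (\<lambda>_. lborel :: real measure))"
    using qf_meas[of "Suc n" "insert n {..<n}" M] by (auto simp: ins)
  have "(\<integral>\<^sup>+y. ennreal (exp (- qf (Suc n) M y / 2)) \<partial>PiM {..<Suc n} (\<lambda>_. lborel :: real measure))
     = (\<integral>\<^sup>+x. (\<integral>\<^sup>+u. ennreal (exp (- qf (Suc n) M (x(n := u)) / 2)) \<partial>lborel) \<partial>PiM {..<n} (\<lambda>_. lborel :: real measure))"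
    unfolding ins by (rule product_nn_integral_insert[OF _ _ meas]) auto
  also have "\<dots> = (\<integral>\<^sup>+x. ennreal (sqrt (2 * pi / a)) * ennreal (exp (- qf n S x / 2)) \<partial>PiM {..<n} (\<lambda>_. lborel :: real measure))"
  proof (intro nn_integral_cong)
    fix x :: "nat \<Rightarrow> real"
    have "(\<integral>\<^sup>+u. ennreal (exp (- qf (Suc n) M (x(n := u)) / 2)) \<partial>lborel)
        = (\<integral>\<^sup>+u. ennreal (exp (- (qf n M x + 2 * u * b x + a * u^2) / 2)) \<partial>lborel)"
      unfolding Q by (simp add: qf_upd b_def lin_upd)
    also have "\<dots> = ennreal (exp (- (qf n M x - (b x)^2 / a) / 2) * sqrt (2 * pi / a))"
      by (rule gauss_1d[OF a])
    also have "\<dots> = ennreal (sqrt (2 * pi / a) * exp (- qf n S x / 2))"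
      by (simp add: QS mult.commute)
    also have "\<dots> = ennreal (sqrt (2 * pi / a)) * ennreal (exp (- qf n S x / 2))"
      by (rule ennreal_mult) (use a in auto)
    finally show "(\<integral>\<^sup>+u. ennreal (exp (- qf (Suc n) M (x(n := u)) / 2)) \<partial>lborel)
        = ennreal (sqrt (2 * pi / a)) * ennreal (exp (- qf n S x / 2))" .
  qed
  also have "\<dots> = ennreal (sqrt (2 * pi / a)) * (\<integral>\<^sup>+x. ennreal (exp (- qf n S x / 2)) \<partial>PiM {..<n} (\<lambda>_. lborel :: real measure))"
    by (rule nn_integral_cmult) (use qf_meas[of n "{..<n}" S] in auto)
  also have "\<dots> = ennreal (sqrt (2 * pi / a)) * ennreal (sqrt ((2 * pi)^n / dtm n S))"
    using IH by simp
  also have "\<dots> = ennreal (sqrt (2 * pi / a) * sqrt ((2 * pi)^n / dtm n S))"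
    by (rule ennreal_mult[symmetric]) (use IH a in auto)
  also have "sqrt (2 * pi / a) * sqrt ((2 * pi)^n / dtm n S) = sqrt ((2 * pi)^(Suc n) / dtm (Suc n) M)"
    unfolding dt real_sqrt_mult[symmetric] by (simp add: field_simps)
  finally show ?case using dtpos by simp
qed


definition lam :: "real \<Rightarrow> nat \<Rightarrow> nat \<Rightarrow> real" where
  "lam \<mu> N m = \<mu> / (4 * (sin (pi / real N))^2) * (4 * (sin (pi * real m / real N))^2)"

locale setting =
  fixes N :: nat and A :: "nat \<Rightarrow> nat \<Rightarrow> real" and n :: nat
  assumes Nn: "N = Suc n"
    and A: "onb_sum_zero N A"
begin

lemma N0: "N > 0" using Nn by simp

lemma nN: "N - 1 = n" using Nn by simp

lemma sumN: "(\<Sum>m<N. f m) = f 0 + (\<Sum>k<n. f (Suc k))"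
  unfolding Nn by (rule sum.lessThan_Suc_shift)

definition V :: "nat \<Rightarrow> nat \<Rightarrow> real" where
  "V m i = coef N (\<lambda>j. A j i) m"

definition W :: "nat \<Rightarrow> nat \<Rightarrow> real" where
  "W k i = V (Suc k) i"

lemma colsum: "i < n \<Longrightarrow> (\<Sum>k<N. A k i) = 0"
  using A nN by (auto simp: onb_sum_zero_def)

lemma orthA: "i < n \<Longrightarrow> l < n \<Longrightarrow> (\<Sum>k<N. A k i * A k l) = (if i = l then 1 else 0)"
  using A nN by (auto simp: onb_sum_zero_def)

lemma V0: "i < n \<Longrightarrow> V 0 i = 0"
  by (simp add: V_def coef0 colsum)

lemma V_orth: "i < n \<Longrightarrow> l < n \<Longrightarrow> (\<Sum>m<N. V m i * V m l) = (if i = l then 1 else 0)"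
  unfolding V_def using parseval2[OF N0, of "\<lambda>j. A j i" "\<lambda>j. A j l"] orthA by simp

lemma W_orth: "i < n \<Longrightarrow> l < n \<Longrightarrow> (\<Sum>k<n. W k i * W k l) = (if i = l then 1 else 0)"
proof -
  assume i: "i < n" and l: "l < n"
  have "(\<Sum>m<N. V m i * V m l) = V 0 i * V 0 l + (\<Sum>k<n. W k i * W k l)"
    unfolding W_def by (rule sumN)
  then show ?thesis using V_orth[OF i l] V0[OF i] by simp
qed

lemma coef_matvec: "coef N (matvec N A y) m = (\<Sum>i<n. V m i * y i)"
proof -
  have "coef N (matvec N A y) m = (\<Sum>j<N. \<Sum>i<n. hb N m j * A j i * y i)"
    unfolding coef_def matvec_def nN by (simp add: sum_distrib_left mult_ac)
  also have "\<dots> = (\<Sum>i<n. \<Sum>j<N. hb N m j * A j i * y i)" by (rule sum.swap)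
  also have "\<dots> = (\<Sum>i<n. V m i * y i)"
    by (simp add: V_def coef_def sum_distrib_right)
  finally show ?thesis .
qed

lemma sumzero: "(\<Sum>k<N. matvec N A y k) = 0"
proof -
  have "(\<Sum>k<N. matvec N A y k) = (\<Sum>i<n. (\<Sum>k<N. A k i) * y i)"
    unfolding matvec_def nN by (simp add: sum_distrib_right) (rule sum.swap)
  then show ?thesis by (simp add: colsum)
qed

lemma coef0_matvec: "coef N (matvec N A y) 0 = 0"
  by (simp add: coef0 sumzero)

lemma form:
  "t * P2 N A y + Qf \<mu> N A y = (\<Sum>k<n. (t - 1 + lam \<mu> N (Suc k)) * (\<Sum>i<n. W k i * y i)^2)"
proof -
  define x where "x = matvec N A y"
  define c where "c = coef N x"
  have c0: "c 0 = 0" by (simp add: c_def x_def coef0_matvec)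
  have cW: "c (Suc k) = (\<Sum>i<n. W k i * y i)" for k
    by (simp add: c_def x_def coef_matvec W_def)
  have P: "P2 N A y = (\<Sum>k<n. (\<Sum>i<n. W k i * y i)^2)"
  proof -
    have "P2 N A y = (\<Sum>m<N. (c m)^2)"
      unfolding P2_def c_def x_def using parseval[OF N0] by simp
    also have "\<dots> = (c 0)^2 + (\<Sum>k<n. (c (Suc k))^2)"
      by (rule sumN)
    finally show ?thesis by (simp add: c0 cW)
  qed
  have K: "(\<Sum>k<N. x k * KN \<mu> N x k) = (\<Sum>k<n. lam \<mu> N (Suc k) * (\<Sum>i<n. W k i * y i)^2)"
  proof -
    have "(\<Sum>k<N. x k * KN \<mu> N x k) = \<mu> / (4 * (sin (pi / real N))^2) *
        (\<Sum>j<N. x j * (2 * x j - x ((j + 1) mod N) - x ((j + N - 1) mod N)))"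
      unfolding KN_def by (simp add: sum_distrib_left mult_ac)
    also have "\<dots> = (\<Sum>m<N. lam \<mu> N m * (c m)^2)"
      unfolding lap_form[OF N0] c_def lam_def by (simp add: sum_distrib_left mult_ac)
    also have "\<dots> = lam \<mu> N 0 * (c 0)^2 + (\<Sum>k<n. lam \<mu> N (Suc k) * (c (Suc k))^2)"
      by (rule sumN)
    finally show ?thesis by (simp add: c0 cW)
  qed
  have "t * P2 N A y + Qf \<mu> N A y = t * P2 N A y + (\<Sum>k<N. x k * KN \<mu> N x k) - P2 N A y"
    by (simp add: Qf_def x_def)
  also have "\<dots> = (\<Sum>k<n. (t - 1 + lam \<mu> N (Suc k)) * (\<Sum>i<n. W k i * y i)^2)"
    unfolding K P by (simp add: sum_distrib_left algebra_simps sum.distrib sum_subtractf)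
  finally show ?thesis .
qed

end


context setting
begin

definition Mt :: "real \<Rightarrow> real \<Rightarrow> nat \<Rightarrow> nat \<Rightarrow> real" where
  "Mt \<mu> t i l = (\<Sum>k<n. W k i * ((t - 1 + lam \<mu> N (Suc k)) / real N) * W k l)"

lemma qf_Mt: "qf n (Mt \<mu> t) y = (\<Sum>k<n. ((t - 1 + lam \<mu> N (Suc k)) / real N) * (\<Sum>i<n. W k i * y i)^2)"
proof -
  define d where "d k = (t - 1 + lam \<mu> N (Suc k)) / real N" for k
  have "qf n (Mt \<mu> t) y = (\<Sum>i<n. \<Sum>l<n. \<Sum>k<n. d k * ((W k i * y i) * (W k l * y l)))"
    unfolding qf_def Mt_def d_def[symmetric] by (simp add: sum_distrib_left sum_distrib_right mult_ac)
  also have "\<dots> = (\<Sum>i<n. \<Sum>k<n. \<Sum>l<n. d k * ((W k i * y i) * (W k l * y l)))"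
    by (rule sum.cong[OF refl], rule sum.swap)
  also have "\<dots> = (\<Sum>k<n. \<Sum>i<n. \<Sum>l<n. d k * ((W k i * y i) * (W k l * y l)))"
    by (rule sum.swap)
  also have "\<dots> = (\<Sum>k<n. d k * (\<Sum>i<n. \<Sum>l<n. (W k i * y i) * (W k l * y l)))"
    by (simp only: sum_distrib_left)
  also have "\<dots> = (\<Sum>k<n. d k * (\<Sum>i<n. W k i * y i)^2)"
    by (simp only: power2_eq_square sum_product)
  finally show ?thesis by (simp add: d_def)
qed

lemma sumsq_W: "(\<Sum>k<n. (\<Sum>i<n. W k i * y i)^2) = (\<Sum>i<n. (y i)^2)"
proof -
  have "(\<Sum>k<n. (\<Sum>i<n. W k i * y i)^2) = (\<Sum>k<n. \<Sum>i<n. \<Sum>l<n. y i * y l * (W k i * W k l))"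
    by (simp add: power2_eq_square sum_product mult_ac)
  also have "\<dots> = (\<Sum>i<n. \<Sum>k<n. \<Sum>l<n. y i * y l * (W k i * W k l))"
    by (rule sum.swap)
  also have "\<dots> = (\<Sum>i<n. \<Sum>l<n. \<Sum>k<n. y i * y l * (W k i * W k l))"
    by (rule sum.cong[OF refl], rule sum.swap)
  also have "\<dots> = (\<Sum>i<n. \<Sum>l<n. y i * y l * (if i = l then 1 else 0))"
    by (intro sum.cong refl) (simp add: sum_distrib_left[symmetric] W_orth)
  also have "\<dots> = (\<Sum>i<n. (y i)^2)"
    by (simp add: power2_eq_square if_distrib cong: if_cong)
  finally show ?thesis .
qed

lemma pdm_Mt:
  assumes dpos: "\<And>k. k < n \<Longrightarrow> t - 1 + lam \<mu> N (Suc k) > 0"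
  shows "pdm n (Mt \<mu> t)"
  unfolding pdm_def
proof (intro conjI allI impI)
  fix i j assume "i < n" "j < n"
  show "Mt \<mu> t i j = Mt \<mu> t j i" unfolding Mt_def by (simp add: mult_ac)
next
  fix y :: "nat \<Rightarrow> real" assume "\<exists>i<n. y i \<noteq> 0"
  then obtain i where i: "i < n" "y i \<noteq> 0" by auto
  have "0 < (\<Sum>i<n. (y i)^2)"
    by (rule sum_pos2[of _ i]) (use i in auto)
  then have "0 < (\<Sum>k<n. (\<Sum>i<n. W k i * y i)^2)" by (simp add: sumsq_W)
  then obtain k where k: "k < n" "(\<Sum>i<n. W k i * y i)^2 \<noteq> 0"
    by (metis (no_types, lifting) less_irrefl lessThan_iff sum.neutral)
  have "0 < (\<Sum>k<n. ((t - 1 + lam \<mu> N (Suc k)) / real N) * (\<Sum>i<n. W k i * y i)^2)"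
  proof (rule sum_pos2[of _ k])
    show "0 < ((t - 1 + lam \<mu> N (Suc k)) / real N) * (\<Sum>i<n. W k i * y i)^2"
      using dpos[OF k(1)] k(2) N0 by (intro mult_pos_pos divide_pos_pos) auto
    fix i assume "i \<in> {..<n}"
    then have "0 < t - 1 + lam \<mu> N (Suc i)" using dpos by simp
    then show "0 \<le> ((t - 1 + lam \<mu> N (Suc i)) / real N) * (\<Sum>l<n. W i l * y l)^2"
      using N0 by (intro mult_nonneg_nonneg divide_nonneg_pos) auto
  qed (use k in auto)
  then show "0 < qf n (Mt \<mu> t) y" by (simp add: qf_Mt)
qed

lemma dtm_Mt: "dtm n (Mt \<mu> t) = (\<Prod>k<n. (t - 1 + lam \<mu> N (Suc k)) / real N)"
proof -
  define d where "d k = (t - 1 + lam \<mu> N (Suc k)) / real N" for k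
  define Wm where "Wm = Matrix.mat n n (\<lambda>(k,i). W k i)"
  define Dm where "Dm = Matrix.mat n n (\<lambda>(k,l). if k = l then d k else 0)"
  have C: "Wm \<in> carrier_mat n n" "Dm \<in> carrier_mat n n" "transpose_mat Wm \<in> carrier_mat n n"
    by (simp_all add: Wm_def Dm_def)
  have eq: "Matrix.mat n n (\<lambda>(i,l). Mt \<mu> t i l) = transpose_mat Wm * (Dm * Wm)"
  proof (rule eq_matI)
    fix i l assume i: "i < dim_row (transpose_mat Wm * (Dm * Wm))" and l: "l < dim_col (transpose_mat Wm * (Dm * Wm))"
    then have i': "i < n" and l': "l < n" by (simp_all add: Wm_def Dm_def)
    have DW: "(Dm * Wm) $$ (k, l) = d k * W k l" if k: "k < n" for k
    proof -
      have "(Dm * Wm) $$ (k, l) = (\<Sum>k'<n. (if k = k' then d k else 0) * W k' l)"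
        using k l' by (simp add: Dm_def Wm_def scalar_prod_def atLeast0LessThan)
      also have "\<dots> = (\<Sum>k'<n. if k = k' then d k * W k l else 0)"
        by (rule sum.cong) auto
      also have "\<dots> = d k * W k l" using k by simp
      finally show ?thesis .
    qed
    have "(transpose_mat Wm * (Dm * Wm)) $$ (i, l) = (\<Sum>k<n. W k i * (Dm * Wm) $$ (k, l))"
      using i' l' by (simp add: Wm_def Dm_def scalar_prod_def atLeast0LessThan)
    also have "\<dots> = (\<Sum>k<n. W k i * (d k * W k l))"
      by (intro sum.cong refl) (simp add: DW)
    also have "\<dots> = Mt \<mu> t i l" by (simp add: Mt_def d_def mult_ac)
    finally show "Matrix.mat n n (\<lambda>(i,l). Mt \<mu> t i l) $$ (i, l) = (transpose_mat Wm * (Dm * Wm)) $$ (i, l)"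
      using i' l' by simp
  qed (simp_all add: Wm_def Dm_def)
  have WW: "transpose_mat Wm * Wm = 1\<^sub>m n"
  proof (rule eq_matI)
    fix i l assume "i < dim_row (1\<^sub>m n :: real mat)" "l < dim_col (1\<^sub>m n :: real mat)"
    then have i': "i < n" and l': "l < n" by simp_all
    have "(transpose_mat Wm * Wm) $$ (i, l) = (\<Sum>k<n. W k i * W k l)"
      using i' l' by (simp add: Wm_def scalar_prod_def atLeast0LessThan)
    then show "(transpose_mat Wm * Wm) $$ (i, l) = 1\<^sub>m n $$ (i, l)"
      using i' l' W_orth by simp
  qed (simp_all add: Wm_def)
  have dW: "Determinant.det Wm * Determinant.det Wm = 1"
    using det_mult[OF C(3) C(1)] WW det_transpose[OF C(1)] by simp
  have dD: "Determinant.det Dm = (\<Prod>k<n. d k)"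
  proof -
    have "Determinant.det Dm = prod_list (diag_mat Dm)"
      by (rule det_upper_triangular[OF _ C(2)]) (auto simp: Dm_def upper_triangular_def)
    also have "\<dots> = (\<Prod>k = 0..<n. Dm $$ (k, k))" by (simp add: prod_list_diag_prod Dm_def)
    also have "\<dots> = (\<Prod>k<n. d k)" by (simp add: Dm_def atLeast0LessThan)
    finally show ?thesis .
  qed
  have "dtm n (Mt \<mu> t) = Determinant.det (transpose_mat Wm) * (Determinant.det Dm * Determinant.det Wm)"
    unfolding dtm_def eq using C by (simp add: det_mult)
  also have "\<dots> = Determinant.det Dm * (Determinant.det Wm * Determinant.det Wm)"
    using det_transpose[OF C(1)] by simp
  finally show ?thesis using dW dD by (simp add: d_def)
qed

lemma integrand: "exp (- (t * P2 N A y + Qf \<mu> N A y) / (2 * real N)) = exp (- qf n (Mt \<mu> t) y / 2)"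
proof -
  have "t * P2 N A y + Qf \<mu> N A y = real N * qf n (Mt \<mu> t) y"
    unfolding form qf_Mt using N0 by (simp add: sum_distrib_left)
  then show ?thesis using N0 by simp
qed

lemma ZN_eq:
  assumes dpos: "\<And>k. k < n \<Longrightarrow> t - 1 + lam \<mu> N (Suc k) > 0"
  shows "ZN \<mu> N A t = sqrt ((2 * pi)^n / (\<Prod>k<n. (t - 1 + lam \<mu> N (Suc k)) / real N))"
    and "(\<Prod>k<n. (t - 1 + lam \<mu> N (Suc k)) / real N) > 0"
proof -
  note G = gauss[OF pdm_Mt[OF dpos]]
  then show "(\<Prod>k<n. (t - 1 + lam \<mu> N (Suc k)) / real N) > 0" by (simp add: dtm_Mt)
  have "has_bochner_integral (PiM {..<n} (\<lambda>_. lborel)) (\<lambda>y. exp (- qf n (Mt \<mu> t) y / 2))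
          (sqrt ((2 * pi)^n / dtm n (Mt \<mu> t)))"
  proof (rule has_bochner_integral_nn_integral)
    show "(\<lambda>y. exp (- qf n (Mt \<mu> t) y / 2)) \<in> borel_measurable (PiM {..<n} (\<lambda>_. lborel))"
      using qf_meas[of n "{..<n}" "Mt \<mu> t"] by measurable
  qed (use G in auto)
  then have "ZN \<mu> N A t = sqrt ((2 * pi)^n / dtm n (Mt \<mu> t))"
    unfolding ZN_def nN integrand by (simp add: has_bochner_integral_integral_eq)
  then show "ZN \<mu> N A t = sqrt ((2 * pi)^n / (\<Prod>k<n. (t - 1 + lam \<mu> N (Suc k)) / real N))"
    by (simp add: dtm_Mt)
qed

end


lemma sin_ge_xcos:
  assumes "0 \<le> x" "x \<le> pi"
  shows "x * cos x \<le> sin x"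
proof -
  let ?f = "\<lambda>x. sin x - x * cos x"
  have "?f 0 \<le> ?f x"
  proof (rule DERIV_nonneg_imp_nondecreasing[OF assms(1)])
    fix u assume u: "0 \<le> u" "u \<le> x"
    have "(?f has_real_derivative u * sin u) (at u)"
      by (auto intro!: derivative_eq_intros simp: algebra_simps)
    moreover have "0 \<le> u * sin u" using u assms by (intro mult_nonneg_nonneg sin_ge_zero) auto
    ultimately show "\<exists>y. (?f has_real_derivative y) (at u) \<and> 0 \<le> y" by blast
  qed
  then show ?thesis by simp
qed

lemma sin_ge_half:
  assumes x: "0 \<le> x" "x \<le> pi / 2"
  shows "x / 2 \<le> sin x"
proof -
  have h: "0 \<le> x / 2" "x / 2 \<le> pi / 4" using x by auto
  have c: "cos (pi / 4) \<le> cos (x / 2)"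
    by (rule cos_monotone_0_pi_le) (use h in auto)
  have c2: "(cos (pi / 4))^2 = 1 / 2" by (simp add: cos_45 power_divide)
  have cpos: "0 \<le> cos (pi / 4)" by (simp add: cos_45)
  have "1 / 2 \<le> (cos (x / 2))^2"
    unfolding c2[symmetric] using c cpos by (intro power_mono) auto
  have s: "x / 2 * cos (x / 2) \<le> sin (x / 2)" by (rule sin_ge_xcos) (use h in auto)
  have cx: "0 \<le> cos (x / 2)" using c cpos by linarith
  have "sin x = 2 * sin (x / 2) * cos (x / 2)"
    using sin_double[of "x / 2"] by simp
  also have "\<dots> \<ge> 2 * (x / 2 * cos (x / 2)) * cos (x / 2)"
    using s cx by (intro mult_right_mono) auto
  finally have "x * (cos (x / 2))^2 \<le> sin x" by (simp add: power2_eq_square mult_ac)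
  moreover have "x * (1 / 2) \<le> x * (cos (x / 2))^2"
    using \<open>1 / 2 \<le> (cos (x / 2))^2\<close> x by (intro mult_left_mono) auto
  ultimately show ?thesis by simp
qed

lemma sum_inv_sq: "(\<Sum>k<Suc M. 1 / (real k + 1)^2) \<le> 2 - 1 / (real M + 1)"
proof (induction M)
  case 0
  then show ?case by simp
next
  case (Suc M)
  have "(\<Sum>k<Suc (Suc M). 1 / (real k + 1)^2) = (\<Sum>k<Suc M. 1 / (real k + 1)^2) + 1 / (real M + 2)^2"
    by (simp add: add.commute)
  also have "\<dots> \<le> 2 - 1 / (real M + 1) + 1 / (real M + 2)^2" using Suc by simp
  also have "\<dots> \<le> 2 - 1 / (real (Suc M) + 1)"
  proof -
    define r where "r = real M"
    have r0: "0 \<le> r" by (simp add: r_def)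
    have p1: "0 < r + 1" "0 < r + 2" using r0 by auto
    have e1: "1 / (r + 2)^2 + (r + 2) / (r + 2)^2 = (1 + (r + 2)) / (r + 2)^2"
      by (rule add_divide_distrib[symmetric])
    have e2: "(r + 2) / (r + 2)^2 = 1 / (r + 2)" using p1 by (simp add: power2_eq_square)
    have e: "1 / (r + 2)^2 + 1 / (r + 2) = (r + 3) / (r + 2)^2"
      using e1 unfolding e2 by simp
    have "(r + 3) * (r + 1) \<le> (r + 2)^2" by (simp add: power2_eq_square algebra_simps)
    then have "(r + 3) / (r + 2)^2 \<le> 1 / (r + 1)"
      using p1 by (simp add: divide_simps)
    then have "1 / (r + 2)^2 + 1 / (r + 2) \<le> 1 / (r + 1)" using e by simp
    then show ?thesis by (simp add: r_def add.commute)
  qed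
  finally show ?case .
qed

lemma sum_inv_sq2: "(\<Sum>k<M. 1 / (real k + 1)^2) \<le> 2"
proof (cases M)
  case 0 then show ?thesis by simp
next
  case (Suc M')
  have "0 \<le> 1 / (real M' + 1)" by simp
  then show ?thesis unfolding Suc using sum_inv_sq[of M'] by linarith
qed

lemma lam_bounds:
  assumes N: "N \<ge> 2" and m: "1 \<le> m" "m < N" and mu: "\<mu> > 0"
  shows "lam \<mu> N m \<ge> \<mu>"
    and "1 / lam \<mu> N m \<le> 4 / \<mu> * (1 / (real m)^2 + 1 / (real (N - m))^2)"
proof -
  define p where "p = min m (N - m)"
  have p1: "1 \<le> p" and p2: "2 * p \<le> N" using m by (auto simp: p_def)
  have Npos: "real N > 0" using N by simp
  have sp: "sin (pi * real m / real N) = sin (pi * real p / real N)"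
  proof (cases "m \<le> N - m")
    case True then show ?thesis by (simp add: p_def)
  next
    case False
    then have "p = N - m" by (simp add: p_def)
    then have "pi * real p / real N = pi - pi * real m / real N"
      using m Npos by (simp add: of_nat_diff field_simps)
    then show ?thesis by simp
  qed
  have a1: "pi / real N \<le> pi * real p / real N"
    using p1 Npos by (simp add: divide_right_mono)
  have a2: "pi * real p / real N \<le> pi / 2"
  proof -
    have "real (2 * p) \<le> real N" using p2 by linarith
    then have "pi * (2 * real p) \<le> pi * real N" by (intro mult_left_mono) auto
    then show ?thesis using Npos by (simp add: field_simps)
  qed
  have s1pos: "0 < sin (pi / real N)"
  proof (rule sin_gt_zero)
    show "0 < pi / real N" using Npos by simp
    have "1 < real N" using N by simp
    then show "pi / real N < pi" using Npos by (simp add: divide_less_eq)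
  qed
  have s1le: "sin (pi / real N) \<le> sin (pi * real p / real N)"
  proof -
    have b0: "0 \<le> pi / real N" using Npos by simp
    show ?thesis by (rule sin_monotone_2pi_le) (use a1 a2 b0 pi_gt_zero in linarith)+
  qed
  have s1x: "sin (pi / real N) \<le> pi / real N" by (rule sin_x_le_x) (use Npos in simp)
  have spx: "pi * real p / real N / 2 \<le> sin (pi * real p / real N)"
    by (rule sin_ge_half) (use a2 Npos in auto)
  have lam_eq: "lam \<mu> N m = \<mu> * (sin (pi * real p / real N))^2 / (sin (pi / real N))^2"
    unfolding lam_def sp by simp
  have sq: "(sin (pi / real N))^2 \<le> (sin (pi * real p / real N))^2"
    using s1le s1pos by (intro power_mono) auto
  show "lam \<mu> N m \<ge> \<mu>"
    unfolding lam_eq using sq s1pos mu by (simp add: field_simps)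
  have ppos: "0 < pi * real p / real N" using p1 Npos by simp
  have "1 / lam \<mu> N m = (sin (pi / real N))^2 / (\<mu> * (sin (pi * real p / real N))^2)"
    unfolding lam_eq by simp
  also have "\<dots> \<le> (pi / real N)^2 / (\<mu> * (pi * real p / real N / 2)^2)"
  proof (rule frac_le)
    show "0 \<le> (pi / real N)^2" by simp
    show "(sin (pi / real N))^2 \<le> (pi / real N)^2" using s1x s1pos by (intro power_mono) auto
    show "0 < \<mu> * (pi * real p / real N / 2)^2"
      by (intro mult_pos_pos zero_less_power) (use ppos mu in auto)
    show "\<mu> * (pi * real p / real N / 2)^2 \<le> \<mu> * (sin (pi * real p / real N))^2"
      using spx ppos mu by (intro mult_left_mono power_mono) auto
  qed
  also have "\<dots> = 4 / \<mu> * (1 / (real p)^2)"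
    using Npos p1 by (simp add: field_simps power2_eq_square)
  also have "1 / (real p)^2 \<le> 1 / (real m)^2 + 1 / (real (N - m))^2"
  proof (cases "m \<le> N - m")
    case True then show ?thesis by (simp add: p_def)
  next
    case False then show ?thesis by (simp add: p_def)
  qed
  then have "4 / \<mu> * (1 / (real p)^2) \<le> 4 / \<mu> * (1 / (real m)^2 + 1 / (real (N - m))^2)"
    using mu by (intro mult_left_mono) auto
  finally show "1 / lam \<mu> N m \<le> 4 / \<mu> * (1 / (real m)^2 + 1 / (real (N - m))^2)" .
qed

lemma sum_inv_lam:
  assumes N: "N = Suc n" and mu: "\<mu> > 0"
  shows "(\<Sum>k<n. 1 / lam \<mu> N (Suc k)) \<le> 16 / \<mu>"
proof (cases "n = 0")
  case True then show ?thesis using mu by simp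
next
  case False
  then have N2: "N \<ge> 2" using N by simp
  have "(\<Sum>k<n. 1 / lam \<mu> N (Suc k)) \<le> (\<Sum>k<n. 4 / \<mu> * (1 / (real (Suc k))^2 + 1 / (real (N - Suc k))^2))"
    by (intro sum_mono lam_bounds(2)[OF N2 _ _ mu]) (use N in auto)
  also have "\<dots> = 4 / \<mu> * ((\<Sum>k<n. 1 / (real k + 1)^2) + (\<Sum>k<n. 1 / (real (n - Suc k) + 1)^2))"
  proof -
    have "(\<Sum>k<n. 1 / (real (Suc k))^2 + 1 / (real (N - Suc k))^2)
        = (\<Sum>k<n. 1 / (real k + 1)^2 + 1 / (real (n - Suc k) + 1)^2)"
    proof (rule sum.cong[OF refl])
      fix k assume "k \<in> {..<n}"
      then have "N - Suc k = Suc (n - Suc k)" using N by auto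
      then show "1 / (real (Suc k))^2 + 1 / (real (N - Suc k))^2 = 1 / (real k + 1)^2 + 1 / (real (n - Suc k) + 1)^2"
        by (simp add: add.commute)
    qed
    then show ?thesis
      by (simp only: sum_distrib_left[symmetric] sum.distrib)
  qed
  also have "(\<Sum>k<n. 1 / (real (n - Suc k) + 1)^2) = (\<Sum>k<n. 1 / (real k + 1)^2)"
    by (rule sum.nat_diff_reindex)
  also have "4 / \<mu> * ((\<Sum>k<n. 1 / (real k + 1)^2) + (\<Sum>k<n. 1 / (real k + 1)^2)) \<le> 4 / \<mu> * (2 + 2)"
    using sum_inv_sq2[of n] mu by (intro mult_left_mono add_mono) auto
  finally show ?thesis by simp
qed


lemma ratio_term:
  fixes \<alpha> \<beta> t t0 :: real
  assumes a: "\<alpha> > 0" and b: "\<beta> > 0" and e: "\<beta> - \<alpha> = t - t0"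
  shows "exp (- \<bar>t - t0\<bar> * (1 / \<alpha>)) \<le> \<alpha> / \<beta>"
proof -
  have "\<beta> = \<alpha> + (t - t0)" using e by simp
  then have "\<beta> / \<alpha> = 1 + (t - t0) / \<alpha>" using a by (simp add: add_divide_distrib)
  also have "\<dots> \<le> 1 + \<bar>t - t0\<bar> / \<alpha>" using a by (simp add: divide_right_mono)
  also have "\<dots> \<le> exp (\<bar>t - t0\<bar> / \<alpha>)" by (rule exp_ge_add_one_self)
  finally have "\<beta> / \<alpha> \<le> exp (\<bar>t - t0\<bar> / \<alpha>)" .
  then have "1 / exp (\<bar>t - t0\<bar> / \<alpha>) \<le> 1 / (\<beta> / \<alpha>)"
    using a b by (intro divide_left_mono) auto
  then show ?thesis using a b by (simp add: exp_minus field_simps)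
qed

theorem lemma5p5:
  fixes \<mu> t0 :: real
  assumes "\<mu> > 1" and "t0 > - (\<mu> - 1)"
  shows "\<exists>\<gamma> > 0. \<forall>N :: nat. \<forall>A t. 0 < N \<longrightarrow> onb_sum_zero N A \<longrightarrow> t > - (\<mu> - 1) \<longrightarrow>
           ZN \<mu> N A t / ZN \<mu> N A t0 \<ge> exp (- \<gamma> * \<bar>t - t0\<bar> / 2)"
proof -
  have mu: "\<mu> > 0" using assms by simp
  define \<kappa> where "\<kappa> = min 1 ((t0 - 1 + \<mu>) / \<mu>)"
  have kpos: "\<kappa> > 0" using assms by (simp add: \<kappa>_def)
  define \<gamma> where "\<gamma> = 16 / (\<mu> * \<kappa>)"
  have gpos: "\<gamma> > 0" using kpos mu by (simp add: \<gamma>_def)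
  show ?thesis
  proof (intro exI[of _ \<gamma>] conjI gpos allI impI)
    fix N :: nat and A t
    assume N0: "0 < N" and A: "onb_sum_zero N A" and t: "t > - (\<mu> - 1)"
    define n where "n = N - 1"
    have Nn: "N = Suc n" using N0 by (simp add: n_def)
    interpret setting N A n by standard (use Nn A in auto)
    have lamge: "lam \<mu> N (Suc k) \<ge> \<mu>" if "k < n" for k
      by (rule lam_bounds(1)) (use that Nn mu in auto)
    have dpos_t: "t - 1 + lam \<mu> N (Suc k) > 0" if "k < n" for k
      using lamge[OF that] t by simp
    have dpos_0: "t0 - 1 + lam \<mu> N (Suc k) > 0" if "k < n" for k
      using lamge[OF that] assms by simp
    define P where "P s = (\<Prod>k<n. (s - 1 + lam \<mu> N (Suc k)) / real N)" for s
    have Zt: "ZN \<mu> N A t = sqrt ((2 * pi)^n / P t)" and Pt: "P t > 0"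
      using ZN_eq[OF dpos_t] by (simp_all add: P_def)
    have Z0: "ZN \<mu> N A t0 = sqrt ((2 * pi)^n / P t0)" and P0: "P t0 > 0"
      using ZN_eq[OF dpos_0] by (simp_all add: P_def)
    have ratio: "ZN \<mu> N A t / ZN \<mu> N A t0 = sqrt (P t0 / P t)"
      unfolding Zt Z0 real_sqrt_divide[symmetric] using Pt P0 by (simp add: field_simps)
    have PP: "P t0 / P t = (\<Prod>k<n. (t0 - 1 + lam \<mu> N (Suc k)) / (t - 1 + lam \<mu> N (Suc k)))"
    proof -
      have r: "(x / real N) / (y / real N) = x / y" for x y
        using N0 by (cases "y = 0") (simp_all add: field_simps)
      show ?thesis unfolding P_def prod_dividef[symmetric] r ..
    qed
    have alpha: "1 / (t0 - 1 + lam \<mu> N (Suc k)) \<le> 1 / \<kappa> * (1 / lam \<mu> N (Suc k))" if k: "k < n" for k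
    proof -
      have lpos: "lam \<mu> N (Suc k) > 0" using lamge[OF k] mu by simp
      have "\<kappa> * lam \<mu> N (Suc k) \<le> t0 - 1 + lam \<mu> N (Suc k)"
      proof (cases "t0 \<ge> 1")
        case True
        have "\<kappa> * lam \<mu> N (Suc k) \<le> 1 * lam \<mu> N (Suc k)"
          using lpos by (intro mult_right_mono) (auto simp: \<kappa>_def)
        then show ?thesis using True by simp
      next
        case False
        have "\<kappa> * lam \<mu> N (Suc k) \<le> (t0 - 1 + \<mu>) / \<mu> * lam \<mu> N (Suc k)"
          using lpos by (intro mult_right_mono) (auto simp: \<kappa>_def)
        also have "\<dots> \<le> t0 - 1 + lam \<mu> N (Suc k)"
        proof -
          have "(t0 - 1) * (lam \<mu> N (Suc k) - \<mu>) \<le> 0"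
            using False lamge[OF k] by (intro mult_nonpos_nonneg) auto
          then show ?thesis using mu by (simp add: field_simps)
        qed
        finally show ?thesis .
      qed
      then have "1 / (t0 - 1 + lam \<mu> N (Suc k)) \<le> 1 / (\<kappa> * lam \<mu> N (Suc k))"
        using kpos lpos dpos_0[OF k] by (intro divide_left_mono mult_pos_pos) auto
      then show ?thesis by simp
    qed
    have sumb: "(\<Sum>k<n. 1 / (t0 - 1 + lam \<mu> N (Suc k))) \<le> \<gamma>"
    proof -
      have "(\<Sum>k<n. 1 / (t0 - 1 + lam \<mu> N (Suc k))) \<le> (\<Sum>k<n. 1 / \<kappa> * (1 / lam \<mu> N (Suc k)))"
        by (intro sum_mono alpha) auto
      also have "\<dots> = 1 / \<kappa> * (\<Sum>k<n. 1 / lam \<mu> N (Suc k))" by (simp add: sum_distrib_left)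
      also have "\<dots> \<le> 1 / \<kappa> * (16 / \<mu>)"
        using sum_inv_lam[OF Nn mu] kpos by (intro mult_left_mono) auto
      finally show ?thesis by (simp add: \<gamma>_def mult.commute)
    qed
    have "exp (- \<bar>t - t0\<bar> * \<gamma>) \<le> exp (- \<bar>t - t0\<bar> * (\<Sum>k<n. 1 / (t0 - 1 + lam \<mu> N (Suc k))))"
      using sumb by (simp add: mult_left_mono)
    also have "\<dots> = (\<Prod>k<n. exp (- \<bar>t - t0\<bar> * (1 / (t0 - 1 + lam \<mu> N (Suc k)))))"
      by (simp add: exp_sum[symmetric] sum_distrib_left)
    also have "\<dots> \<le> (\<Prod>k<n. (t0 - 1 + lam \<mu> N (Suc k)) / (t - 1 + lam \<mu> N (Suc k)))"
      by (intro prod_mono conjI ratio_term dpos_t dpos_0) auto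
    also have "\<dots> = P t0 / P t" by (simp add: PP)
    finally have E: "exp (- \<bar>t - t0\<bar> * \<gamma>) \<le> P t0 / P t" .
    have "exp (- \<gamma> * \<bar>t - t0\<bar> / 2) = sqrt (exp (- \<bar>t - t0\<bar> * \<gamma>))"
    proof -
      have "exp (- \<bar>t - t0\<bar> * \<gamma>) = (exp (- \<gamma> * \<bar>t - t0\<bar> / 2))^2"
        by (simp add: power2_eq_square exp_add[symmetric])
      then show ?thesis by simp
    qed
    also have "\<dots> \<le> sqrt (P t0 / P t)" using E by simp
    finally show "ZN \<mu> N A t / ZN \<mu> N A t0 \<ge> exp (- \<gamma> * \<bar>t - t0\<bar> / 2)" unfolding ratio .
  qed
qed


end
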